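(* Let $p\in\mathbb N$, let $U_j\ne0$, $j=1,2,\dots$, be given numbers, and let numbers $F_j$, $j\ge -p$, satisfy $F_{-p}=\dots=F_p=1$ and $$U_j=\frac{F_{j-p-1}F_{j+p}}{F_{j-1}F_j},\qquad j=1,2,\dots.$$ Then $$F_j=\prod_{i=1}^j U_i^{\lfloor\frac{j-i}{p}\rfloor-\lfloor\frac{j-i}{p+1}\rfloor},\qquad j=1,2,\dots.$$ *)

theory Defs
  imports Complex_Main
begin

end

theory Submission imports Defs begin
definition ex :: "int \<Rightarrow> int \<Rightarrow> int" where
 "ex P m = (if m < 0 then 0 else m div P - m div (P+1))"
lemma sub_div: "(P::int) \<noteq> 0 \<Longrightarrow> (a - P) div P = a div P - 1"
  using div_add_self2[of P "a - P"] by simp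
lemma ex_id: assumes "(P::int) \<ge> 1"
  shows "ex P (m+P) + ex P (m-P-1) = (if m = 0 then 1 else 0) + ex P (m-1) + ex P m"
proof -
  consider "m < -P" | "-P \<le> m \<and> m < 0" | "m = 0" | "1 \<le> m \<and> m < P" | "m = P" | "m \<ge> P + 1" by linarith
  then show ?thesis
  proof cases
    case 1 then show ?thesis using assms by (simp add: ex_def)
  next
    case 2 then show ?thesis using assms by (simp add: ex_def)
  next
    case 3 then show ?thesis using assms by (simp add: ex_def)
  next
    case 4
    have a: "(m+P) div P = 1" using 4 assms div_add_self2[of P m] by simp
    have b: "(m+P) div (P+1) = 1" using 4 assms div_add_self2[of "P+1" "m-1"] by (simp add: algebra_simps)
    have c: "(m - 1) div (P+1) = 0" "m div (P+1) = 0" "(m-1) div P = 0" "m div P = 0" using 4 by simp_all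
    show ?thesis using 4 assms a b c by (simp add: ex_def)
  next
    case 5
    have a: "(P+P) div P = 2" using assms div_add_self2[of P P] by simp
    have b: "(P+P) div (P+1) = 1" using assms div_add_self2[of "P+1" "P-1"] by (simp add: algebra_simps)
    have c: "(P - 1) div (P+1) = 0" "P div (P+1) = 0" "(P-1) div P = 0" using assms by simp_all
    show ?thesis using 5 assms a b c by (simp add: ex_def)
  next
    case 6
    have a: "(m+P) div P = m div P + 1" using assms div_add_self2[of P m] by simp
    have b: "(m+P) div (P+1) = (m-1) div (P+1) + 1" using assms div_add_self2[of "P+1" "m-1"] by (simp add: algebra_simps)
    have c: "(m-P-1) div P = (m-1) div P - 1" using assms sub_div[of P "m-1"] by (simp add: algebra_simps)
    have d: "(m-P-1) div (P+1) = m div (P+1) - 1" using assms sub_div[of "P+1" m] by (simp add: algebra_simps)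
    show ?thesis using 6 assms a b c d by (simp add: ex_def)
  qed
qed

lemma main_id:
  fixes U :: "int \<Rightarrow> complex" and P k :: int
  assumes P: "P \<ge> 1" and k: "k \<ge> 1" and Unz: "\<forall>j\<ge>1. U j \<noteq> 0"
  defines "H \<equiv> \<lambda>j. \<Prod>i\<in>{1..k+P}. U i powi ex P (j - i)"
  shows "H (k+P) * H (k-P-1) = U k * (H (k-1) * H k)"
proof -
  have "H (k+P) * H (k-P-1) = (\<Prod>i\<in>{1..k+P}. U i powi (ex P (k-i+P) + ex P (k-i-P-1)))"
    unfolding H_def prod.distrib[symmetric]
    by (rule prod.cong, simp, subst power_int_add, use Unz in auto, simp add: algebra_simps)
  also have "\<dots> = (\<Prod>i\<in>{1..k+P}. U i powi ((if k - i = 0 then 1 else 0) + ex P (k-i-1) + ex P (k-i)))"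
    using ex_id[OF P] by simp
  also have "\<dots> = (\<Prod>i\<in>{1..k+P}. (if i = k then U k else 1) * (U i powi ex P (k-i-1) * U i powi ex P (k-i)))"
    by (rule prod.cong, simp, subst power_int_add, use Unz in auto, subst power_int_add, use Unz in auto)
  also have "\<dots> = U k * (H (k-1) * H k)"
    unfolding H_def prod.distrib using k P by (simp add: algebra_simps)
  finally show ?thesis .
qed

lemma G_eq_H:
  fixes U :: "int \<Rightarrow> complex" and P :: int
  assumes "j \<le> N"
  shows "(\<Prod>i\<in>{1..j}. U i powi ex P (j - i)) = (\<Prod>i\<in>{1..N}. U i powi ex P (j - i))"
  by (rule prod.mono_neutral_left) (use assms in \<open>auto simp: ex_def\<close>)

theorem proposition5:
  fixes p :: nat and U :: "int \<Rightarrow> complex" and F :: "int \<Rightarrow> complex"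
  assumes p_pos: "p \<ge> 1"
    and U_nz: "\<forall>j\<ge>1. U j \<noteq> 0"
    and F_init: "\<forall>j. - int p \<le> j \<and> j \<le> int p \<longrightarrow> F j = 1"
    and rec: "\<forall>j\<ge>1. U j = F (j - int p - 1) * F (j + int p) / (F (j - 1) * F j)"
  shows "\<forall>j\<ge>1. F j = (\<Prod>i=1..j. U i powi
            (\<lfloor>real_of_int (j - i) / real p\<rfloor> - \<lfloor>real_of_int (j - i) / real (p + 1)\<rfloor>))"
proof -
  define P where "P = int p"
  have P: "P \<ge> 1" using p_pos P_def by simp
  define G where "G = (\<lambda>j. \<Prod>i\<in>{1..j}. U i powi ex P (j - i))"
  have key: "F j = G j" if "- P \<le> j" for j
  proof -
    have "\<forall>j. nat (j + P) = n \<longrightarrow> - P \<le> j \<longrightarrow> F j = G j" for n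
    proof (induction n rule: less_induct)
      case (less n)
      show ?case
      proof (intro allI impI)
        fix j assume nj: "nat (j + P) = n" and j: "- P \<le> j"
        show "F j = G j"
        proof (cases "j \<le> P")
          case True
          have "F j = 1" using F_init True j P_def by simp
          moreover have "G j = 1" unfolding G_def
            by (rule prod.neutral) (use True in \<open>auto simp: ex_def\<close>)
          ultimately show ?thesis by simp
        next
          case False
          define k where "k = j - P"
          have k: "k \<ge> 1" using False k_def by simp
          have IH: "F m = G m" if "- P \<le> m" "m < j" for m
            using less[rule_format, of "nat (m + P)" m] that nj by simp
          have Uk: "U k = F (k - P - 1) * F (k + P) / (F (k - 1) * F k)"
            using rec k P_def by simp
          have Ukn: "U k \<noteq> 0" using U_nz k by simp
          have nz: "F (k - P - 1) \<noteq> 0" "F (k-1) \<noteq> 0" "F k \<noteq> 0"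
            using Uk Ukn by auto
          have e1: "F (k-P-1) = G (k-P-1)" "F (k-1) = G (k-1)" "F k = G k"
            using IH k P k_def by auto
          have jk: "j = k + P" using k_def by simp
          have "F (k+P) = U k * (F (k-1) * F k) / F (k-P-1)"
            using Uk nz by (simp add: field_simps)
          then have Fj: "F j = U k * (F (k-1) * F k) / F (k-P-1)" using jk by simp
          have "G (k+P) * G (k-P-1) = U k * (G (k-1) * G k)"
            unfolding G_def
            apply (subst (1 2 3 4) G_eq_H[where N="k+P"])
            using k P apply simp_all
            using main_id[OF P k U_nz] by simp
          moreover have "G (k-P-1) \<noteq> 0" using nz e1 by simp
          ultimately have "G (k+P) = U k * (G (k-1) * G k) / G (k-P-1)"
            by (simp add: field_simps)
          then have "G j = U k * (G (k-1) * G k) / G (k-P-1)" using jk by simp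
          then show ?thesis using Fj e1 by simp
        qed
      qed
    qed
    then show ?thesis using that by blast
  qed
  show ?thesis
  proof (intro allI impI)
    fix j :: int assume j: "j \<ge> 1"
    have "F j = G j" using key j P by simp
    also have "\<dots> = (\<Prod>i=1..j. U i powi
            (\<lfloor>real_of_int (j - i) / real p\<rfloor> - \<lfloor>real_of_int (j - i) / real (p + 1)\<rfloor>))"
      unfolding G_def
    proof (rule prod.cong)
      fix i assume "i \<in> {1..j}"
      then have "\<not> j - i < 0" by simp
      moreover have "real p = real_of_int P" "real (p+1) = real_of_int (P+1)" using P_def by simp_all
      ultimately show "U i powi ex P (j - i) = U i powi
            (\<lfloor>real_of_int (j - i) / real p\<rfloor> - \<lfloor>real_of_int (j - i) / real (p + 1)\<rfloor>)"
        unfolding ex_def by (simp only: floor_divide_of_int_eq if_False)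
    qed simp
    finally show "F j = (\<Prod>i=1..j. U i powi
            (\<lfloor>real_of_int (j - i) / real p\<rfloor> - \<lfloor>real_of_int (j - i) / real (p + 1)\<rfloor>))" .
  qed
qed

end
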